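(* Let $n\ge1$ and $\ell\ge1$, and let $\mathcal{R}_{\ell,e}(\mathcal{C}_{n,A})$ be the set of regions of $\mathcal{C}_{n,A}$ of level $\ell$ contained in $\{x_1>x_2>\dots>x_n\}$. For $\Delta\in\mathcal{R}_{\ell,e}(\mathcal{C}_{n,A})$ and $\bm x\in\Delta$, the set $K=\{k\in[n-1]:x_k-x_{k+1}>a_1\}$ has exactly $\ell-1$ elements $i_1<\dots<i_{\ell-1}$; put $i_0=0$, $i_\ell=n$, $n_j=i_j-i_{j-1}$, and let $\Delta_j$ be the region of $\mathcal{C}_{n_j,A}$ containing $(x_{i_{j-1}+1},\dots,x_{i_j})$. Then $\varphi_\ell(\Delta)=(\Delta_1,\dots,\Delta_\ell)$ is independent of the choice of $\bm x\in\Delta$, each $\Delta_j$ lies in $\mathcal{R}_{1,e}(\mathcal{C}_{n_j,A})$, and \[\varphi_\ell:\mathcal{R}_{\ell,e}(\mathcal{C}_{n,A})\longrightarrow\bigsqcup_{\substack{n_1+\dots+n_\ell=n\\ n_1,\dots,n_\ell>0}}\mathcal{R}_{1,e}(\mathcal{C}_{n_1,A})\times\cdots\times\mathcal{R}_{1,e}(\mathcal{C}_{n_\ell,A})\] is a bijection.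
   Context: Let $A=\{a_1,\dots,a_m\}$ with $a_1>\dots>a_m>0$; for $n\ge1$, $\mathcal{C}_{n,A}$ is the arrangement in $\mathbb{R}^n$ of hyperplanes $x_i-x_j=0$ ($i<j$) and $x_i-x_j=a_k$ ($i\ne j$, $1\le k\le m$) (for $n=1$ it is empty and its unique region $\mathbb{R}$ has level 1); regions are connected components of the complement. The level of $X\subseteq\mathbb{R}^n$ is the smallest integer $\ell\ge0$ such that there are a linear subspace $W$ of dimension $\ell$ and $r>0$ with $X\subseteq\{\bm x:\min_{\bm y\in W}\|\bm x-\bm y\|\le r\}$. *)

theory Defs
  imports "HOL-Analysis.Analysis"
begin

text \<open>Points of R^n are represented as functions nat => real whose coordinates
  0,...,n-1 are the coordinates x_1,...,x_n of the paper and which vanish from n on.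
  The topology is the product topology on nat => real (HOL-Analysis instance),
  which on the carrier Rn n agrees with the Euclidean topology.\<close>

definition Rn :: "nat \<Rightarrow> (nat \<Rightarrow> real) set" where
  "Rn n = {x. \<forall>i\<ge>n. x i = 0}"

definition enorm :: "nat \<Rightarrow> (nat \<Rightarrow> real) \<Rightarrow> real" where
  "enorm n x = sqrt (\<Sum>i<n. (x i)^2)"

definition lin_subspace_dim :: "nat \<Rightarrow> (nat \<Rightarrow> real) set \<Rightarrow> nat \<Rightarrow> bool" where
  "lin_subspace_dim n W l \<longleftrightarrow>
     (\<exists>v :: nat \<Rightarrow> nat \<Rightarrow> real.
        (\<forall>j<l. v j \<in> Rn n) \<and>
        (\<forall>c :: nat \<Rightarrow> real. (\<forall>i. (\<Sum>j<l. c j * v j i) = 0) \<longrightarrow> (\<forall>j<l. c j = 0)) \<and>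
        W = {y. \<exists>c :: nat \<Rightarrow> real. y = (\<lambda>i. \<Sum>j<l. c j * v j i)})"

definition level :: "nat \<Rightarrow> (nat \<Rightarrow> real) set \<Rightarrow> nat" where
  "level n X = (LEAST l. \<exists>W r. lin_subspace_dim n W l \<and> r > 0 \<and>
      X \<subseteq> {x. \<exists>y\<in>W. enorm n (\<lambda>i. x i - y i) \<le> r})"

definition hyps :: "real set \<Rightarrow> nat \<Rightarrow> (nat \<Rightarrow> real) set" where
  "hyps A n = {x. (\<exists>i j. i < j \<and> j < n \<and> x i - x j = 0) \<or>
                  (\<exists>i j a. i < n \<and> j < n \<and> i \<noteq> j \<and> a \<in> A \<and> x i - x j = a)}"

definition complement :: "real set \<Rightarrow> nat \<Rightarrow> (nat \<Rightarrow> real) set" where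
  "complement A n = Rn n - hyps A n"

definition regions :: "real set \<Rightarrow> nat \<Rightarrow> (nat \<Rightarrow> real) set set" where
  "regions A n = {connected_component_set (complement A n) x | x. x \<in> complement A n}"

definition region_of :: "real set \<Rightarrow> nat \<Rightarrow> (nat \<Rightarrow> real) \<Rightarrow> (nat \<Rightarrow> real) set" where
  "region_of A n y = (THE D. D \<in> regions A n \<and> y \<in> D)"

definition dominant :: "nat \<Rightarrow> (nat \<Rightarrow> real) set" where
  "dominant n = {x. \<forall>i. i + 1 < n \<longrightarrow> x i > x (i + 1)}"

definition Rle :: "real set \<Rightarrow> nat \<Rightarrow> nat \<Rightarrow> (nat \<Rightarrow> real) set set" where
  "Rle A n l = {D \<in> regions A n. level n D = l \<and> D \<subseteq> dominant n}"

text \<open>K = {k in [n-1]. x_k - x_{k+1} > a_1}, stored 0-indexed (k0 = k - 1).\<close>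
definition Kset :: "real set \<Rightarrow> nat \<Rightarrow> (nat \<Rightarrow> real) \<Rightarrow> nat set" where
  "Kset A n x = {k. k + 1 < n \<and> x k - x (k + 1) > Max A}"

text \<open>The list i_0 = 0 < i_1 < ... < i_{l-1} < i_l = n.\<close>
definition cuts :: "real set \<Rightarrow> nat \<Rightarrow> (nat \<Rightarrow> real) \<Rightarrow> nat list" where
  "cuts A n x = 0 # map Suc (sorted_list_of_set (Kset A n x)) @ [n]"

text \<open>phi_l applied via the point x: the list of pairs (n_j, Delta_j), j = 1..l.
  Block j is (x_{i_{j-1}+1}, ..., x_{i_j}) viewed as a point of R^{n_j}.\<close>
definition phi_pt :: "real set \<Rightarrow> nat \<Rightarrow> (nat \<Rightarrow> real) \<Rightarrow> (nat \<times> (nat \<Rightarrow> real) set) list" where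
  "phi_pt A n x = (let c = cuts A n x in
     map (\<lambda>j. let nj = c ! (j + 1) - c ! j in
               (nj, region_of A nj (\<lambda>t. if t < nj then x (c ! j + t) else 0)))
         [0..<length c - 1])"

text \<open>The disjoint union over compositions n_1+...+n_l = n (all n_j > 0) of
  R_{1,e}(C_{n_1,A}) x ... x R_{1,e}(C_{n_l,A}); elements are tagged by the n_j.\<close>
definition target :: "real set \<Rightarrow> nat \<Rightarrow> nat \<Rightarrow> (nat \<times> (nat \<Rightarrow> real) set) list set" where
  "target A n l = {ps. length ps = l \<and> sum_list (map fst ps) = n \<and>
      (\<forall>p\<in>set ps. fst p > 0 \<and> snd p \<in> Rle A (fst p) 1)}"

end

theory Submission
  imports Defs
begin


definition HH :: "real set \<Rightarrow> real set" where
  "HH A = insert 0 (A \<union> uminus ` A)"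

definition peq :: "real set \<Rightarrow> nat \<Rightarrow> (nat \<Rightarrow> real) \<Rightarrow> (nat \<Rightarrow> real) \<Rightarrow> bool" where
  "peq A m x y \<longleftrightarrow> (\<forall>i j h. i < j \<longrightarrow> j < m \<longrightarrow> h \<in> HH A \<longrightarrow> sgn (x i - x j - h) = sgn (y i - y j - h))"

definition cell :: "real set \<Rightarrow> nat \<Rightarrow> (nat \<Rightarrow> real) \<Rightarrow> (nat \<Rightarrow> real) set" where
  "cell A m x = {y \<in> Rn m. peq A m x y}"

lemma peq_refl: "peq A m x x" by (simp add: peq_def)
lemma peq_sym: "peq A m x y \<Longrightarrow> peq A m y x" by (simp add: peq_def)
lemma peq_trans: "peq A m x y \<Longrightarrow> peq A m y z \<Longrightarrow> peq A m x z" by (simp add: peq_def)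

lemma compl_iff:
  "x \<in> complement A m \<longleftrightarrow> x \<in> Rn m \<and> (\<forall>i j h. i < j \<longrightarrow> j < m \<longrightarrow> h \<in> HH A \<longrightarrow> x i - x j \<noteq> h)"
proof
  assume x: "x \<in> complement A m"
  show "x \<in> Rn m \<and> (\<forall>i j h. i < j \<longrightarrow> j < m \<longrightarrow> h \<in> HH A \<longrightarrow> x i - x j \<noteq> h)"
  proof (intro conjI allI impI)
    show "x \<in> Rn m" using x by (simp add: complement_def)
    fix i j h assume ij: "i < j" "j < m" and h: "h \<in> HH A"
    show "x i - x j \<noteq> h"
    proof
      assume e: "x i - x j = h"
      from h consider "h = 0" | "h \<in> A" | a where "a \<in> A" "h = - a" unfolding HH_def by auto
      then have "x \<in> hyps A m"
      proof cases
        case 1 then show ?thesis using e ij unfolding hyps_def by auto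
      next
        case 2 then show ?thesis using e ij unfolding hyps_def by (metis (mono_tags, lifting) mem_Collect_eq nat_neq_iff order.strict_trans)
      next
        case 3
        then have "x j - x i = a" using e by simp
        then show ?thesis using 3 ij unfolding hyps_def by (metis (mono_tags, lifting) mem_Collect_eq nat_neq_iff order.strict_trans)
      qed
      then show False using x by (simp add: complement_def)
    qed
  qed
next
  assume r: "x \<in> Rn m \<and> (\<forall>i j h. i < j \<longrightarrow> j < m \<longrightarrow> h \<in> HH A \<longrightarrow> x i - x j \<noteq> h)"
  have r2: "\<forall>i j h. i < j \<longrightarrow> j < m \<longrightarrow> h \<in> HH A \<longrightarrow> x i - x j \<noteq> h" using r by blast
  have "x \<notin> hyps A m"
  proof
    assume "x \<in> hyps A m"
      then consider i j where "i < j" "j < m" "x i - x j = 0"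
      | i j a where "i < m" "j < m" "i \<noteq> j" "a \<in> A" "x i - x j = a"
      unfolding hyps_def by auto
    then show False
    proof cases
      case (1 i j)
      have "(0::real) \<in> HH A" by (simp add: HH_def)
      then show ?thesis using r2 1 by blast
    next
      case (2 i j a)
      show ?thesis
      proof (cases "i < j")
        case True
        have "a \<in> HH A" using 2 by (simp add: HH_def)
        then show ?thesis using r2 2 True by blast
      next
        case False
        then have "j < i" using 2 by simp
        moreover have "x j - x i = - a" using 2 by simp
        moreover have "- a \<in> HH A" using 2 by (simp add: HH_def)
        ultimately show ?thesis using r2 2 by blast
      qed
    qed
  qed
  then show "x \<in> complement A m" using r by (simp add: complement_def)
qed

lemma cell_sub_compl:
  assumes "x \<in> complement A m" shows "cell A m x \<subseteq> complement A m"
proof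
  fix y assume y: "y \<in> cell A m x"
  have "\<forall>i j h. i < j \<longrightarrow> j < m \<longrightarrow> h \<in> HH A \<longrightarrow> y i - y j \<noteq> h"
  proof (intro allI impI)
    fix i j h assume a: "i < j" "j < m" "h \<in> HH A"
    have "sgn (x i - x j - h) = sgn (y i - y j - h)" using y a by (simp add: cell_def peq_def)
    moreover have "x i - x j \<noteq> h" using assms a compl_iff by blast
    ultimately show "y i - y j \<noteq> h" by (auto simp: sgn_if split: if_splits)
  qed
  then show "y \<in> complement A m" using y by (simp add: compl_iff cell_def)
qed

lemma self_in_cell: "x \<in> Rn m \<Longrightarrow> x \<in> cell A m x"
  by (simp add: cell_def peq_refl)

lemma cell_eq: "y \<in> cell A m x \<Longrightarrow> cell A m y = cell A m x"
  unfolding cell_def by (auto intro: peq_trans peq_sym)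

lemma sgn_comb:
  fixes d e t :: real
  assumes "sgn d = sgn e" "0 \<le> t" "t \<le> 1"
  shows "sgn ((1 - t) * d + t * e) = sgn d"
proof -
  consider "d > 0" "e > 0" | "d < 0" "e < 0" | "d = 0" "e = 0" using assms(1)
    by (metis sgn_0_0 sgn_greater sgn_less linorder_neqE_linordered_idom)
  then show ?thesis
  proof cases
    case 1
    have "(1 - t) * d \<ge> 0" using 1 assms by simp
    moreover have "t * e \<ge> 0" using 1 assms by simp
    moreover have "(1 - t) * d + t * e > 0"
    proof (cases "t = 0")
      case True then show ?thesis using 1 by simp
    next
      case False then have "t * e > 0" using 1 assms by simp
      then show ?thesis using \<open>(1 - t) * d \<ge> 0\<close> by linarith
    qed
    then show ?thesis using 1 by simp
  next
    case 2
    have "(1 - t) * d \<le> 0" using 2 assms by (simp add: mult_nonneg_nonpos)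
    moreover have "(1 - t) * d + t * e < 0"
    proof (cases "t = 0")
      case True then show ?thesis using 2 by simp
    next
      case False then have "t * e < 0" using 2 assms by (simp add: mult_pos_neg)
      then show ?thesis using \<open>(1 - t) * d \<le> 0\<close> by linarith
    qed
    then show ?thesis using 2 by simp
  qed simp
qed

lemma cell_sub_comp:
  assumes x: "x \<in> complement A m"
  shows "cell A m x \<subseteq> connected_component_set (complement A m) x"
proof
  fix y assume y: "y \<in> cell A m x"
  define g where "g = (\<lambda>t::real. \<lambda>i. (1 - t) * x i + t * y i)"
  have cont: "continuous_on {0..1} g"
    unfolding g_def by (intro continuous_intros)
  have conn: "connected (g ` {0..1})"
    by (rule connected_continuous_image[OF cont]) simp
  have sub: "g ` {0..1} \<subseteq> cell A m x"
  proof
    fix z assume "z \<in> g ` {0..1}"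
    then obtain t where t: "0 \<le> t" "t \<le> 1" and z: "z = g t" by auto
    have xR: "x \<in> Rn m" using x by (simp add: complement_def)
    have yR: "y \<in> Rn m" using y by (simp add: cell_def)
    have "z \<in> Rn m" using xR yR unfolding z g_def Rn_def by simp
    moreover have "peq A m x z"
      unfolding peq_def
    proof (intro allI impI)
      fix i j h assume a: "i < j" "j < m" "h \<in> HH A"
      have s: "sgn (x i - x j - h) = sgn (y i - y j - h)" using y a by (simp add: cell_def peq_def)
      have "z i - z j - h = (1 - t) * (x i - x j - h) + t * (y i - y j - h)"
        unfolding z g_def by (simp add: algebra_simps)
      then show "sgn (x i - x j - h) = sgn (z i - z j - h)"
        using sgn_comb[OF s t] by simp
    qed
    ultimately show "z \<in> cell A m x" by (simp add: cell_def)
  qed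
  have "x \<in> g ` {0..1}" by (rule image_eqI[of _ _ 0]) (auto simp: g_def)
  moreover have "y \<in> g ` {0..1}" by (rule image_eqI[of _ _ 1]) (auto simp: g_def)
  ultimately show "y \<in> connected_component_set (complement A m) x"
    unfolding connected_component_def using conn sub cell_sub_compl[OF x] by blast
qed

lemma comp_sub_cell:
  assumes x: "x \<in> complement A m"
  shows "connected_component_set (complement A m) x \<subseteq> cell A m x"
proof
  fix y assume "y \<in> connected_component_set (complement A m) x"
  then obtain T where T: "connected T" "T \<subseteq> complement A m" "x \<in> T" "y \<in> T"
    unfolding connected_component_def by blast
  have "peq A m x y"
    unfolding peq_def
  proof (intro allI impI)
    fix i j h assume a: "i < j" "j < m" "h \<in> HH A"
    define f where "f = (\<lambda>z::nat\<Rightarrow>real. z i - z j - h)"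
    have "continuous_on T f" unfolding f_def
      by (intro continuous_intros continuous_on_subset[OF continuous_on_product_coordinates]) auto
    then have c: "connected (f ` T)" using T(1) connected_continuous_image by blast
    have nz: "\<And>z. z \<in> T \<Longrightarrow> f z \<noteq> 0" using T(2) a compl_iff unfolding f_def by fastforce
    have "sgn (f x) = sgn (f y)"
    proof (rule ccontr)
      assume ne: "sgn (f x) \<noteq> sgn (f y)"
      have fx: "f x \<noteq> 0" "f y \<noteq> 0" using nz T by auto
      have "f x < 0 \<and> f y > 0 \<or> f x > 0 \<and> f y < 0" using ne fx
        by (metis linorder_neqE_linordered_idom sgn_neg sgn_pos)
      then have "0 \<in> f ` T"
        using c T(3,4) unfolding connected_iff_interval
        by (metis imageI less_eq_real_def)
      then show False using nz by auto
    qed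
    then show "sgn (x i - x j - h) = sgn (y i - y j - h)" by (simp add: f_def)
  qed
  moreover have "y \<in> Rn m" using T by (auto simp: complement_def)
  ultimately show "y \<in> cell A m x" by (simp add: cell_def)
qed

lemma comp_eq_cell:
  "x \<in> complement A m \<Longrightarrow> connected_component_set (complement A m) x = cell A m x"
  using comp_sub_cell cell_sub_comp by blast

lemma regions_eq: "regions A m = cell A m ` complement A m"
proof -
  have "regions A m = {cell A m x | x. x \<in> complement A m}"
    unfolding regions_def using comp_eq_cell by blast
  then show ?thesis by blast
qed

lemma region_of_eq:
  assumes y: "y \<in> complement A m" shows "region_of A m y = cell A m y"
  unfolding region_of_def
proof (rule the_equality)
  show "cell A m y \<in> regions A m \<and> y \<in> cell A m y"
    using y by (auto simp: regions_eq complement_def intro: self_in_cell)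
next
  fix D assume "D \<in> regions A m \<and> y \<in> D"
  then obtain x where "x \<in> complement A m" "D = cell A m x" "y \<in> cell A m x"
    by (auto simp: regions_eq)
  then show "D = cell A m y" using cell_eq by metis
qed



lemma ss_less_iff:
  assumes "sorted_wrt (<) (c::nat list)" "i < length c" "j < length c"
  shows "(c ! i < c ! j) = (i < j)"
proof -
  have "i < j \<Longrightarrow> c ! i < c ! j" using assms sorted_wrt_nth_less by blast
  moreover have "j < i \<Longrightarrow> c ! j < c ! i" using assms sorted_wrt_nth_less by blast
  ultimately show ?thesis by (metis less_asym' linorder_neqE_nat)
qed

lemma ss_le_iff:
  assumes "sorted_wrt (<) (c::nat list)" "i < length c" "j < length c"
  shows "(c ! i \<le> c ! j) = (i \<le> j)"
  using ss_less_iff[OF assms(1) assms(3) assms(2)] by (simp add: not_less[symmetric])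

lemma locate:
  assumes "sorted_wrt (<) (c::nat list)" "c \<noteq> []" "c ! 0 \<le> a" "a < last c"
  shows "\<exists>j. Suc j < length c \<and> c ! j \<le> a \<and> a < c ! Suc j"
  using assms
proof (induction c)
  case Nil then show ?case by simp
next
  case (Cons x xs)
  show ?case
  proof (cases xs)
    case Nil then show ?thesis using Cons.prems by simp
  next
    case (Cons y ys)
    show ?thesis
    proof (cases "a < y")
      case True then show ?thesis using Cons Cons.prems by (intro exI[of _ 0]) simp
    next
      case False
      have "sorted_wrt (<) xs" using Cons.prems by simp
      moreover have "xs ! 0 \<le> a" using False Cons by simp
      moreover have "a < last xs" using Cons.prems Cons by simp
      ultimately obtain j where "Suc j < length xs" "xs ! j \<le> a" "a < xs ! Suc j"
        using Cons.IH Cons by blast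
      then show ?thesis by (intro exI[of _ "Suc j"]) simp
    qed
  qed
qed

lemma between:
  assumes "sorted_wrt (<) (c::nat list)" "Suc j < length c" "c ! j < v" "v < c ! Suc j"
  shows "v \<notin> set c"
proof
  assume "v \<in> set c"
  then obtain t where t: "t < length c" "c ! t = v" by (auto simp: in_set_conv_nth)
  have "j < t" using ss_less_iff[OF assms(1), of j t] assms t by simp
  moreover have "t < Suc j" using ss_less_iff[OF assms(1), of t "Suc j"] assms t by simp
  ultimately show False by simp
qed

lemma telescope:
  assumes "\<And>t. Suc t < length c \<Longrightarrow> (c::nat list) ! t \<le> c ! Suc t" "j < length c"
  shows "c ! j = c ! 0 + (\<Sum>t<j. c ! Suc t - c ! t)"
  using assms(2)
proof (induction j)
  case 0 then show ?case by simp
next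
  case (Suc j)
  have le: "c ! j \<le> c ! Suc j" using assms(1)[of j] Suc.prems by blast
  have "c ! j = c ! 0 + (\<Sum>t<j. c ! Suc t - c ! t)" using Suc by simp
  then show ?case using le by simp
qed

locale arr =
  fixes A :: "real set"
  assumes fA: "finite A" and neA: "A \<noteq> {}" and pA: "\<forall>a\<in>A. a > 0"
begin

lemma MaxA: "Max A \<in> A" "Max A > 0" "\<And>a. a \<in> A \<Longrightarrow> a \<le> Max A"
  using fA neA pA by auto

lemma HH_bound: "h \<in> HH A \<Longrightarrow> - Max A \<le> h \<and> h \<le> Max A"
  using MaxA pA unfolding HH_def by force

lemma sgn_big: "d > Max A \<Longrightarrow> h \<in> HH A \<Longrightarrow> sgn (d - h) = 1"
  using HH_bound[of h] by simp

lemma MaxA_HH: "Max A \<in> HH A" "(0::real) \<in> HH A"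
  using MaxA unfolding HH_def by auto

lemma Kset_peq: "peq A m x y \<Longrightarrow> Kset A m x = Kset A m y"
proof -
  assume p: "peq A m x y"
  have "\<And>k. k + 1 < m \<Longrightarrow> (x k - x (k+1) > Max A) = (y k - y (k+1) > Max A)"
  proof -
    fix k assume "k + 1 < m"
    then have "sgn (x k - x (k+1) - Max A) = sgn (y k - y (k+1) - Max A)"
      using p MaxA_HH unfolding peq_def by simp
    then show "(x k - x (k+1) > Max A) = (y k - y (k+1) > Max A)"
      by (metis diff_gt_0_iff_gt sgn_pos sgn_greater)
  qed
  then show ?thesis unfolding Kset_def by auto
qed

lemma cell_dominant:
  assumes "x \<in> dominant m" shows "cell A m x \<subseteq> dominant m"
proof
  fix p assume p: "p \<in> cell A m x"
  show "p \<in> dominant m" unfolding dominant_def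
  proof (intro allI impI CollectI)
    fix i assume i: "i + 1 < m"
    have pe: "peq A m x p" using p by (simp add: cell_def)
    have "sgn (x i - x (i+1) - 0) = sgn (p i - p (i+1) - 0)"
      using pe[unfolded peq_def, rule_format, of i "i+1" 0] i MaxA_HH(2) by simp
    moreover have "x i > x (i+1)" using assms i by (simp add: dominant_def)
    ultimately show "p i > p (i + 1)" by (metis diff_0_right diff_gt_0_iff_gt sgn_pos sgn_greater)
  qed
qed

lemma dom_mono: "x \<in> dominant m \<Longrightarrow> a \<le> b \<Longrightarrow> b < m \<Longrightarrow> x b \<le> x a"
proof (induction b)
  case 0 then show ?case by simp
next
  case (Suc b)
  show ?case
  proof (cases "a = Suc b")
    case True then show ?thesis by simp
  next
    case False
    then have "x b \<le> x a" using Suc by simp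
    moreover have "x (Suc b) < x b" using Suc.prems unfolding dominant_def by auto
    ultimately show ?thesis by simp
  qed
qed

lemma separated:
  assumes "x \<in> dominant m" "k \<in> Kset A m x" "a \<le> k" "k < b" "b < m"
  shows "x a - x b > Max A"
proof -
  have "x k - x (k+1) > Max A" using assms(2) by (simp add: Kset_def)
  moreover have "x k \<le> x a" using dom_mono[OF assms(1) assms(3)] assms by simp
  moreover have "x b \<le> x (k+1)" using dom_mono[OF assms(1), of "k+1" b] assms by simp
  ultimately show ?thesis by simp
qed

lemma Kset_sub: "Kset A m x \<subseteq> {..<m}" "finite (Kset A m x)"
  unfolding Kset_def by (auto intro: finite_subset[of _ "{..<m}"])

lemma cuts_len: "length (cuts A m x) = card (Kset A m x) + 2"
  using Kset_sub by (simp add: cuts_def)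

lemma cuts_ss: assumes "m \<ge> 1" shows "sorted_wrt (<) (cuts A m x)"
proof -
  let ?L = "sorted_list_of_set (Kset A m x)"
  have sL: "sorted_wrt (<) ?L" by simp
  have sL': "sorted_wrt (<) (map Suc ?L)" using sL by (simp add: sorted_wrt_map)
  have setL: "set ?L = Kset A m x" using Kset_sub by simp
  have "\<forall>v\<in>set (map Suc ?L). v < m" using setL by (auto simp: Kset_def)
  then have "sorted_wrt (<) (map Suc ?L @ [m])" using sL' by (simp add: sorted_wrt_append)
  then show ?thesis unfolding cuts_def using assms by (auto simp: sorted_wrt_append)
qed

lemma cuts_set: "set (cuts A m x) = insert 0 (insert m (Suc ` Kset A m x))"
  using Kset_sub by (auto simp: cuts_def)

lemma cuts_0: "cuts A m x ! 0 = 0" by (simp add: cuts_def)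

lemma cuts_last: "cuts A m x ! (length (cuts A m x) - 1) = m"
  by (simp add: cuts_def nth_append)

lemma cuts_lastv: "last (cuts A m x) = m"
  by (simp add: cuts_def)

lemma cuts_le_m: assumes "m \<ge> 1" "j < length (cuts A m x)" shows "cuts A m x ! j \<le> m"
  using ss_le_iff[of "cuts A m x" j "length (cuts A m x) - 1"] cuts_ss[OF assms(1)] assms cuts_last[of m x]
  by simp

lemma cuts_inner:
  assumes "m \<ge> 1" "0 < j" "j < length (cuts A m x) - 1"
  shows "\<exists>k\<in>Kset A m x. cuts A m x ! j = Suc k"
proof -
  let ?c = "cuts A m x"
  have ss: "sorted_wrt (<) ?c" using cuts_ss[OF assms(1)] .
  have jl: "j < length ?c" "0 < length ?c" "length ?c - 1 < length ?c" using assms by auto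
  have "?c ! j \<in> set ?c" using jl by simp
  moreover have "?c ! j \<noteq> 0" using ss_less_iff[OF ss, of 0 j] jl assms cuts_0[of m x] by simp
  moreover have "?c ! j \<noteq> m" using ss_less_iff[OF ss, of j "length ?c - 1"] jl assms cuts_last[of m x] by simp
  ultimately show ?thesis using cuts_set by auto
qed

lemma K_iff_cut: "k \<in> Kset A m x \<longleftrightarrow> k + 1 < m \<and> Suc k \<in> set (cuts A m x)"
  using cuts_set by (auto simp: Kset_def)

end


definition ip :: "nat \<Rightarrow> (nat \<Rightarrow> real) \<Rightarrow> (nat \<Rightarrow> real) \<Rightarrow> real" where
  "ip m f g = (\<Sum>i<m. f i * g i)"
definition bvec :: "nat list \<Rightarrow> nat \<Rightarrow> nat \<Rightarrow> real" where
  "bvec c j i = (if c ! j \<le> i \<and> i < c ! Suc j then 1 else 0)"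
definition fvec :: "nat list \<Rightarrow> nat \<Rightarrow> nat \<Rightarrow> real" where
  "fvec c j i = (if i < c ! Suc j then 1 else 0)"

lemma bvec_at:
  assumes "sorted_wrt (<) c" "Suc j < length c" "Suc t < length c"
  shows "bvec c j (c ! t) = (if j = t then 1 else 0)"
  using ss_le_iff[OF assms(1), of j t] ss_less_iff[OF assms(1), of t "Suc j"] assms
  by (auto simp: bvec_def)

lemma bvec_unique:
  assumes "sorted_wrt (<) c" "Suc j0 < length c" "c ! j0 \<le> i" "i < c ! Suc j0" "Suc j < length c"
  shows "bvec c j i = (if j = j0 then 1 else 0)"
proof (cases "j = j0")
  case True then show ?thesis using assms by (simp add: bvec_def)
next
  case False
  have "\<not> (c ! j \<le> i \<and> i < c ! Suc j)"
  proof
    assume h: "c ! j \<le> i \<and> i < c ! Suc j"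
    then have "c ! j < c ! Suc j0" using assms by simp
    then have "j < Suc j0" using ss_less_iff[OF assms(1), of j "Suc j0"] assms by simp
    moreover have "c ! j0 < c ! Suc j" using h assms by simp
    then have "j0 < Suc j" using ss_less_iff[OF assms(1), of j0 "Suc j"] assms by simp
    ultimately show False using False by simp
  qed
  then show ?thesis using False by (simp add: bvec_def)
qed

lemma hom_sys:
  fixes M :: "nat \<Rightarrow> nat \<Rightarrow> real"
  shows "finite J \<Longrightarrow> card J > k \<Longrightarrow> \<exists>d. (\<exists>j\<in>J. d j \<noteq> 0) \<and> (\<forall>t<k. (\<Sum>j\<in>J. M t j * d j) = 0)"
proof (induction k arbitrary: J M)
  case 0
  then have "J \<noteq> {}" by auto
  then show ?case by (intro exI[of _ "\<lambda>_. 1"]) auto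
next
  case (Suc k)
  show ?case
  proof (cases "\<forall>j\<in>J. M k j = 0")
    case True
    obtain d where d: "\<exists>j\<in>J. d j \<noteq> 0" "\<forall>t<k. (\<Sum>j\<in>J. M t j * d j) = 0"
      using Suc.IH[of J M] Suc.prems by auto
    have "\<forall>t<Suc k. (\<Sum>j\<in>J. M t j * d j) = 0"
    proof (intro allI impI)
      fix t assume "t < Suc k"
      then consider "t < k" | "t = k" by linarith
      then show "(\<Sum>j\<in>J. M t j * d j) = 0"
        by cases (use d True in auto)
    qed
    then show ?thesis using d by blast
  next
    case False
    then obtain j0 where j0: "j0 \<in> J" "M k j0 \<noteq> 0" by blast
    define J' where "J' = J - {j0}"
    define M' where "M' = (\<lambda>t j. M t j - M t j0 * M k j / M k j0)"
    have fJ': "finite J'" using Suc.prems by (simp add: J'_def)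
    have cJ': "card J' > k" using Suc.prems j0 by (simp add: J'_def)
    obtain d' where d': "\<exists>j\<in>J'. d' j \<noteq> 0" "\<forall>t<k. (\<Sum>j\<in>J'. M' t j * d' j) = 0"
      using Suc.IH[OF fJ' cJ', of M'] by blast
    define d where "d = (\<lambda>j. if j = j0 then - (\<Sum>j\<in>J'. M k j * d' j) / M k j0 else d' j)"
    have split: "\<And>t. (\<Sum>j\<in>J. M t j * d j) = M t j0 * d j0 + (\<Sum>j\<in>J'. M t j * d' j)"
    proof -
      fix t
      have "(\<Sum>j\<in>J. M t j * d j) = M t j0 * d j0 + (\<Sum>j\<in>J'. M t j * d j)"
        unfolding J'_def using Suc.prems j0 by (simp add: sum.remove)
      moreover have "(\<Sum>j\<in>J'. M t j * d j) = (\<Sum>j\<in>J'. M t j * d' j)"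
        by (rule sum.cong) (auto simp: d_def J'_def)
      ultimately show "(\<Sum>j\<in>J. M t j * d j) = M t j0 * d j0 + (\<Sum>j\<in>J'. M t j * d' j)" by simp
    qed
    have "\<forall>t<Suc k. (\<Sum>j\<in>J. M t j * d j) = 0"
    proof (intro allI impI)
      fix t assume "t < Suc k"
      then consider "t < k" | "t = k" by linarith
      then show "(\<Sum>j\<in>J. M t j * d j) = 0"
      proof cases
        case 1
        have "(\<Sum>j\<in>J'. M' t j * d' j) = (\<Sum>j\<in>J'. M t j * d' j) - M t j0 / M k j0 * (\<Sum>j\<in>J'. M k j * d' j)"
          unfolding M'_def by (simp add: sum_subtractf sum_distrib_left algebra_simps)
        then have "(\<Sum>j\<in>J'. M t j * d' j) = M t j0 / M k j0 * (\<Sum>j\<in>J'. M k j * d' j)"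
          using d' 1 by simp
        then show ?thesis using split[of t] j0 by (simp add: d_def)
      next
        case 2
        then show ?thesis using split[of t] j0 by (simp add: d_def)
      qed
    qed
    moreover have "\<exists>j\<in>J. d j \<noteq> 0" using d' by (auto simp: d_def J'_def)
    ultimately show ?thesis by blast
  qed
qed

lemma chain:
  fixes p :: "nat \<Rightarrow> real"
  assumes "\<forall>k. s \<le> k \<longrightarrow> k < i \<longrightarrow> 0 \<le> p k - p (Suc k) \<and> p k - p (Suc k) \<le> M"
  shows "s \<le> i \<Longrightarrow> 0 \<le> p s - p i \<and> p s - p i \<le> real (i - s) * M"
  using assms
proof (induction i)
  case 0 then show ?case by simp
next
  case (Suc i)
  show ?case
  proof (cases "s = Suc i")
    case True then show ?thesis by simp
  next
    case False
    then have si: "s \<le> i" using Suc by simp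
    then have ih: "0 \<le> p s - p i \<and> p s - p i \<le> real (i - s) * M" using Suc by simp
    have st: "0 \<le> p i - p (Suc i) \<and> p i - p (Suc i) \<le> M" using Suc.prems si by simp
    have "real (Suc i - s) = real (i - s) + 1" using si by simp
    then show ?thesis using ih st by (simp add: algebra_simps)
  qed
qed

lemma bounded_lin:
  fixes a q B :: real
  assumes "\<forall>t\<ge>0. \<bar>a + t * q\<bar> \<le> B"
  shows "q = 0"
proof (rule ccontr)
  assume q: "q \<noteq> 0"
  define t where "t = (B + \<bar>a\<bar> + 1) / \<bar>q\<bar>"
  have B0: "B \<ge> 0" using assms[rule_format, of 0] by simp
  have t0: "t \<ge> 0" using B0 q by (simp add: t_def)
  have tq: "t * \<bar>q\<bar> = B + \<bar>a\<bar> + 1" using q by (simp add: t_def)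
  have "\<bar>t * q\<bar> = B + \<bar>a\<bar> + 1" using tq t0 by (simp add: abs_mult)
  moreover have "\<bar>t * q\<bar> \<le> \<bar>a + t * q\<bar> + \<bar>a\<bar>" by linarith
  ultimately show False using assms[rule_format, OF t0] by linarith
qed

lemma ip_diff: "ip m (\<lambda>i. f i - g i) u = ip m f u - ip m g u"
  by (simp add: ip_def sum_subtractf left_diff_distrib)

lemma ip_add_scale: "ip m (\<lambda>i. f i + t * g i) u = ip m f u + t * ip m g u"
  by (simp add: ip_def sum.distrib distrib_right sum_distrib_left mult.assoc)

lemma ip_lincomb: "ip m (\<lambda>i. \<Sum>j\<in>J. d j * g j i) u = (\<Sum>j\<in>J. d j * ip m (g j) u)"
  unfolding ip_def by (simp add: sum_distrib_right sum_distrib_left mult.assoc sum.swap[of _ J])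

lemma ip_comm: "ip m f g = ip m g f" by (simp add: ip_def mult.commute)



context arr begin

lemma shift_in_cell:
  assumes m1: "m \<ge> 1" and x: "x \<in> complement A m" "x \<in> dominant m"
    and j: "Suc j < length (cuts A m x)" and t: "t \<ge> 0"
  shows "(\<lambda>i. x i + t * fvec (cuts A m x) j i) \<in> cell A m x"
proof -
  define c where "c = cuts A m x"
  define q where "q = c ! Suc j"
  have qm: "q \<le> m" using cuts_le_m[OF m1 j] by (simp add: q_def c_def)
  have xR: "x \<in> Rn m" using x by (simp add: complement_def)
  have R: "(\<lambda>i. x i + t * fvec c j i) \<in> Rn m"
    using xR qm by (auto simp: Rn_def fvec_def q_def)
  have P: "peq A m x (\<lambda>i. x i + t * fvec c j i)"
    unfolding peq_def
  proof (intro allI impI)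
    fix a b h assume ab: "a < b" "b < m" and h: "h \<in> HH A"
    consider "b < q" | "q \<le> a" | "a < q" "q \<le> b" by linarith
    then show "sgn (x a - x b - h) = sgn (x a + t * fvec c j a - (x b + t * fvec c j b) - h)"
    proof cases
      case 1 then show ?thesis using ab by (simp add: fvec_def q_def)
    next
      case 2 then show ?thesis using ab by (simp add: fvec_def q_def)
    next
      case 3
      have "Suc j \<noteq> length c - 1"
      proof
        assume "Suc j = length c - 1"
        then have "q = m" using cuts_last[of m x] by (simp add: q_def c_def)
        then show False using 3 ab by simp
      qed
      then have "Suc j < length c - 1" using j by (simp add: c_def)
      then obtain k where k: "k \<in> Kset A m x" "q = Suc k"
        using cuts_inner[OF m1, of "Suc j" x] by (auto simp: q_def c_def)
      have sep: "x a - x b > Max A" using separated[OF x(2) k(1), of a b] 3 ab k by simp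
      have e2: "x a + t * fvec c j a - (x b + t * fvec c j b) - h = (x a - x b + t) - h"
        using 3 by (simp add: fvec_def q_def)
      show ?thesis unfolding e2 using sgn_big[OF sep h] sgn_big[of "x a - x b + t" h] sep t h by simp
    qed
  qed
  show ?thesis using R P by (simp add: cell_def c_def)
qed

lemma enorm_coord:
  assumes "i < m" shows "\<bar>z i\<bar> \<le> enorm m z"
proof -
  have "(z i)^2 \<le> (\<Sum>i<m. (z i)^2)"
    using assms by (intro member_le_sum) auto
  then have "sqrt ((z i)^2) \<le> sqrt (\<Sum>i<m. (z i)^2)" by (rule real_sqrt_le_mono)
  then show ?thesis by (simp add: enorm_def)
qed

lemma level_cell:
  assumes m1: "m \<ge> 1" and x: "x \<in> complement A m" "x \<in> dominant m"
  shows "level m (cell A m x) = card (Kset A m x) + 1"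
proof -
  define c where "c = cuts A m x"
  define l where "l = length c - 1"
  have ss: "sorted_wrt (<) c" using cuts_ss[OF m1] by (simp add: c_def)
  have lc: "length c = card (Kset A m x) + 2" using cuts_len by (simp add: c_def)
  have ll: "l = card (Kset A m x) + 1" using lc by (simp add: l_def)
  have jl: "\<And>j. (Suc j < length c) = (j < l)" using lc ll by auto
  have c0: "c ! 0 = 0" using cuts_0 by (simp add: c_def)
  have cl: "c ! l = m" using cuts_last[of m x] by (simp add: c_def l_def)
  have cne: "c \<noteq> []" using lc by auto
  have lastc: "last c = m" using cuts_lastv by (simp add: c_def)
  have xR: "x \<in> Rn m" using x by (simp add: complement_def)
  have cjm: "\<And>j. j < l \<Longrightarrow> c ! j < m"
  proof -
    fix j assume j: "j < l"
    have "l < length c" using lc ll by simp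
    then have "c ! j < c ! l" using ss_less_iff[OF ss, of j l] j by simp
    then show "c ! j < m" using cl by simp
  qed
  let ?P = "\<lambda>l. \<exists>W r. lin_subspace_dim m W l \<and> r > 0 \<and>
      cell A m x \<subseteq> {p. \<exists>y\<in>W. enorm m (\<lambda>i. p i - y i) \<le> r}"
  have up: "?P l"
  proof -
    define W where "W = {y. \<exists>cc :: nat \<Rightarrow> real. y = (\<lambda>i. \<Sum>j<l. cc j * bvec c j i)}"
    have lin: "lin_subspace_dim m W l"
      unfolding lin_subspace_dim_def
    proof (intro exI[of _ "bvec c"] conjI)
      show "\<forall>j<l. bvec c j \<in> Rn m"
      proof (intro allI impI)
        fix j assume "j < l"
        then have "c ! Suc j \<le> m" using cuts_le_m[OF m1, of "Suc j" x] jl by (simp add: c_def)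
        then show "bvec c j \<in> Rn m" by (auto simp: Rn_def bvec_def)
      qed
      show "\<forall>cc. (\<forall>i. (\<Sum>j<l. cc j * bvec c j i) = 0) \<longrightarrow> (\<forall>j<l. cc j = 0)"
      proof (intro allI impI)
        fix cc :: "nat \<Rightarrow> real" and t
        assume h: "\<forall>i. (\<Sum>j<l. cc j * bvec c j i) = 0" and t: "t < l"
        have "(\<Sum>j<l. cc j * bvec c j (c ! t)) = (\<Sum>j\<in>{..<l}. if j = t then cc t else 0)"
          by (rule sum.cong) (use t jl ss in \<open>auto simp: bvec_at\<close>)
        also have "\<dots> = cc t" using t by simp
        finally show "cc t = 0" using h by simp
      qed
    qed (simp add: W_def)
    define r where "r = sqrt (real m * (real m * Max A)^2) + 1"
    have "sqrt (real m * (real m * Max A)^2) \<ge> 0" by simp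
    then have r0: "r > 0" unfolding r_def by linarith
    have sub: "cell A m x \<subseteq> {p. \<exists>y\<in>W. enorm m (\<lambda>i. p i - y i) \<le> r}"
    proof
      fix p assume p: "p \<in> cell A m x"
      have pd: "p \<in> dominant m" using cell_dominant[OF x(2)] p by blast
      have pK: "Kset A m p = Kset A m x" using p Kset_peq[of m x p] by (simp add: cell_def)
      define y where "y = (\<lambda>i. \<Sum>j<l. p (c ! j) * bvec c j i)"
      have yW: "y \<in> W" unfolding W_def y_def by (rule CollectI, rule exI[of _ "\<lambda>j. p (c ! j)"]) (rule refl)
      have pt: "\<And>i. i < m \<Longrightarrow> (p i - y i)^2 \<le> (real m * Max A)^2"
      proof -
        fix i assume im: "i < m"
        obtain j0 where j0: "Suc j0 < length c" "c ! j0 \<le> i" "i < c ! Suc j0"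
          using locate[OF ss cne] c0 lastc im by auto
        have "y i = (\<Sum>j\<in>{..<l}. if j = j0 then p (c ! j0) else 0)"
          unfolding y_def by (rule sum.cong) (use j0 jl ss in \<open>auto simp: bvec_unique\<close>)
        also have "\<dots> = p (c ! j0)" using j0 jl by simp
        finally have yi: "y i = p (c ! j0)" .
        have steps: "\<forall>k. c ! j0 \<le> k \<longrightarrow> k < i \<longrightarrow> 0 \<le> p k - p (Suc k) \<and> p k - p (Suc k) \<le> Max A"
        proof (intro allI impI)
          fix k assume k: "c ! j0 \<le> k" "k < i"
          have "p k > p (k + 1)" using pd k im by (simp add: dominant_def)
          moreover have "k \<notin> Kset A m p"
          proof
            assume "k \<in> Kset A m p"
            then have "Suc k \<in> set c" using pK K_iff_cut by (simp add: c_def)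
            moreover have "Suc k \<notin> set c" using between[OF ss j0(1)] k j0 by simp
            ultimately show False by simp
          qed
          then have "\<not> (p k - p (k+1) > Max A)" using k im by (simp add: Kset_def)
          ultimately show "0 \<le> p k - p (Suc k) \<and> p k - p (Suc k) \<le> Max A" by simp
        qed
        have ch: "0 \<le> p (c ! j0) - p i \<and> p (c ! j0) - p i \<le> real (i - c ! j0) * Max A"
          using chain[OF steps j0(2)] .
        have "real (i - c ! j0) * Max A \<le> real m * Max A"
          using im MaxA(2) by (intro mult_right_mono) auto
        then have "0 \<le> y i - p i \<and> y i - p i \<le> real m * Max A" using ch yi by simp
        then have "(y i - p i)^2 \<le> (real m * Max A)^2" by (intro power_mono) auto
        then show "(p i - y i)^2 \<le> (real m * Max A)^2" by (simp add: power2_commute)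
      qed
      have "(\<Sum>i<m. (p i - y i)^2) \<le> (\<Sum>i<m. (real m * Max A)^2)"
        using pt by (intro sum_mono) auto
      then have "enorm m (\<lambda>i. p i - y i) \<le> sqrt (real m * (real m * Max A)^2)"
        unfolding enorm_def by (simp add: real_sqrt_le_mono)
      then have "enorm m (\<lambda>i. p i - y i) \<le> r" by (simp add: r_def)
      then show "p \<in> {p. \<exists>y\<in>W. enorm m (\<lambda>i. p i - y i) \<le> r}" using yW by blast
    qed
    show ?thesis using lin r0 sub by blast
  qed
  have low: "\<And>k. ?P k \<Longrightarrow> l \<le> k"
  proof (rule ccontr)
    fix k assume Pk: "?P k" and kl: "\<not> l \<le> k"
    then obtain W r where W: "lin_subspace_dim m W k" and r: "r > 0"
      and sub: "cell A m x \<subseteq> {p. \<exists>y\<in>W. enorm m (\<lambda>i. p i - y i) \<le> r}" by blast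
    obtain v where v: "W = {y. \<exists>cc :: nat \<Rightarrow> real. y = (\<lambda>i. \<Sum>t<k. cc t * v t i)}"
      using W unfolding lin_subspace_dim_def by blast
    obtain d where d: "\<exists>j\<in>{..<l}. d j \<noteq> 0"
      "\<forall>t<k. (\<Sum>j\<in>{..<l}. ip m (bvec c j) (v t) * d j) = 0"
      using hom_sys[of "{..<l}" k "\<lambda>t j. ip m (bvec c j) (v t)"] kl by auto
    obtain j0 where j0: "j0 < l" "d j0 \<noteq> 0" using d(1) by auto
    define u where "u = (\<lambda>i. \<Sum>j<l. d j * bvec c j i)"
    have uv: "\<And>t. t < k \<Longrightarrow> ip m (v t) u = 0"
    proof -
      fix t assume t: "t < k"
      have "ip m (v t) u = ip m u (v t)" by (rule ip_comm)
      also have "\<dots> = (\<Sum>j<l. d j * ip m (bvec c j) (v t))" unfolding u_def by (rule ip_lincomb)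
      also have "\<dots> = 0" using d(2) t by (simp add: mult.commute)
      finally show "ip m (v t) u = 0" .
    qed
    have uW: "\<And>w. w \<in> W \<Longrightarrow> ip m w u = 0"
    proof -
      fix w assume "w \<in> W"
      then obtain cc where w: "w = (\<lambda>i. \<Sum>t<k. cc t * v t i)" using v by blast
      show "ip m w u = 0" unfolding w ip_lincomb using uv by simp
    qed
    define B where "B = r * (\<Sum>i<m. \<bar>u i\<bar>)"
    have bnd: "\<And>p. p \<in> cell A m x \<Longrightarrow> \<bar>ip m p u\<bar> \<le> B"
    proof -
      fix p assume "p \<in> cell A m x"
      then obtain w where w: "w \<in> W" "enorm m (\<lambda>i. p i - w i) \<le> r" using sub by blast
      have "ip m p u = ip m (\<lambda>i. p i - w i) u" using ip_diff[of m p w u] uW[OF w(1)] by simp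
      also have "\<bar>\<dots>\<bar> \<le> (\<Sum>i<m. \<bar>(p i - w i) * u i\<bar>)" unfolding ip_def by (rule sum_abs)
      also have "\<dots> \<le> (\<Sum>i<m. r * \<bar>u i\<bar>)"
      proof (rule sum_mono)
        fix i assume "i \<in> {..<m}"
        then have "\<bar>p i - w i\<bar> \<le> r" using enorm_coord[of i m "\<lambda>i. p i - w i"] w(2) by simp
        then show "\<bar>(p i - w i) * u i\<bar> \<le> r * \<bar>u i\<bar>" by (simp add: abs_mult mult_right_mono)
      qed
      finally show "\<bar>ip m p u\<bar> \<le> B" by (simp add: B_def sum_distrib_left)
    qed
    have fz: "\<And>j. j < l \<Longrightarrow> ip m (fvec c j) u = 0"
    proof -
      fix j assume j: "j < l"
      have "\<forall>t\<ge>0. \<bar>ip m x u + t * ip m (fvec c j) u\<bar> \<le> B"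
      proof (intro allI impI)
        fix t :: real assume t: "t \<ge> 0"
        have "(\<lambda>i. x i + t * fvec c j i) \<in> cell A m x"
          using shift_in_cell[OF m1 x, of j t] j jl t by (simp add: c_def)
        then have "\<bar>ip m (\<lambda>i. x i + t * fvec c j i) u\<bar> \<le> B" by (rule bnd)
        then show "\<bar>ip m x u + t * ip m (fvec c j) u\<bar> \<le> B"
          by (simp only: ip_add_scale)
      qed
      then show "ip m (fvec c j) u = 0" by (rule bounded_lin)
    qed
    have bz: "\<And>j. j < l \<Longrightarrow> ip m (bvec c j) u = 0"
    proof -
      fix j assume j: "j < l"
      show "ip m (bvec c j) u = 0"
      proof (cases j)
        case 0
        have "bvec c j = fvec c j" using c0 0 by (auto simp: bvec_def fvec_def)
        then show ?thesis using fz j by simp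
      next
        case (Suc j')
        have lt: "c ! j < c ! Suc j" using ss_less_iff[OF ss, of j "Suc j"] j jl by simp
        have "bvec c j = (\<lambda>i. fvec c j i - fvec c j' i)"
          using lt Suc by (auto simp: bvec_def fvec_def)
        then show ?thesis using fz[of j] fz[of j'] j Suc ip_diff by simp
      qed
    qed
    have e: "(\<lambda>i. \<Sum>j<l. d j * bvec c j i) = u" by (simp add: u_def)
    have "ip m u u = (\<Sum>j<l. d j * ip m (bvec c j) u)"
      using ip_lincomb[where m=m and d=d and g="bvec c" and J="{..<l}" and u=u] by (simp only: e)
    also have "\<dots> = 0" using bz by simp
    finally have "(\<Sum>i<m. u i * u i) = 0" by (simp add: ip_def)
    then have u0: "\<forall>i\<in>{..<m}. u i * u i = 0"
      using sum_nonneg_eq_0_iff[of "{..<m}" "\<lambda>i. u i * u i"] by simp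
    have "u (c ! j0) = (\<Sum>j\<in>{..<l}. if j = j0 then d j0 else 0)"
      unfolding u_def by (rule sum.cong) (use j0 jl ss in \<open>auto simp: bvec_at\<close>)
    also have "\<dots> = d j0" using j0 by simp
    finally have "u (c ! j0) = d j0" .
    moreover have "c ! j0 < m" using cjm j0 by simp
    ultimately show False using u0 j0 by simp
  qed
  have "level m (cell A m x) = l"
    unfolding level_def by (rule Least_equality) (use up low in auto)
  then show ?thesis using ll by simp
qed

end


definition blk :: "(nat \<Rightarrow> real) \<Rightarrow> nat \<Rightarrow> nat \<Rightarrow> nat \<Rightarrow> real" where
  "blk x s k = (\<lambda>t. if t < k then x (s + t) else 0)"

lemma phi_alt: "phi_pt A n x = map (\<lambda>j. (cuts A n x ! Suc j - cuts A n x ! j,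
    region_of A (cuts A n x ! Suc j - cuts A n x ! j)
      (blk x (cuts A n x ! j) (cuts A n x ! Suc j - cuts A n x ! j)))) [0..<length (cuts A n x) - 1]"
  by (simp add: phi_pt_def Let_def blk_def)

lemma blk_peq:
  assumes "peq A n x y" "s + k \<le> n"
  shows "peq A k (blk x s k) (blk y s k)"
  unfolding peq_def
proof (intro allI impI)
  fix a b h assume ab: "a < b" "b < k" and h: "h \<in> HH A"
  have "s + a < s + b" "s + b < n" using ab assms(2) by auto
  then have "sgn (x (s+a) - x (s+b) - h) = sgn (y (s+a) - y (s+b) - h)"
    using assms(1) h unfolding peq_def by blast
  then show "sgn (blk x s k a - blk x s k b - h) = sgn (blk y s k a - blk y s k b - h)"
    using ab by (simp add: blk_def)
qed

lemma blk_Rn: "blk x s k \<in> Rn k" by (simp add: blk_def Rn_def)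

context arr begin

lemma blk_compl:
  assumes "x \<in> complement A n" "s + k \<le> n"
  shows "blk x s k \<in> complement A k"
proof -
  have "\<forall>a b h. a < b \<longrightarrow> b < k \<longrightarrow> h \<in> HH A \<longrightarrow> blk x s k a - blk x s k b \<noteq> h"
  proof (intro allI impI)
    fix a b h assume ab: "a < b" "b < k" and h: "h \<in> HH A"
    have "s + a < s + b" "s + b < n" using ab assms(2) by auto
    then have "x (s+a) - x (s+b) \<noteq> h" using assms(1) h compl_iff by blast
    then show "blk x s k a - blk x s k b \<noteq> h" using ab by (simp add: blk_def)
  qed
  then show ?thesis using blk_Rn compl_iff by blast
qed

lemma blk_dom:
  assumes "x \<in> dominant n" "s + k \<le> n"
  shows "blk x s k \<in> dominant k"
  using assms unfolding dominant_def blk_def by auto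

lemma block_props:
  assumes n1: "n \<ge> 1" and x: "x \<in> complement A n" "x \<in> dominant n"
    and j: "Suc j < length (cuts A n x)"
  defines "c \<equiv> cuts A n x"
  defines "k \<equiv> c ! Suc j - c ! j"
  shows "k > 0" "c ! j + k \<le> n" "blk x (c ! j) k \<in> complement A k"
    "blk x (c ! j) k \<in> dominant k" "Kset A k (blk x (c ! j) k) = {}"
    "region_of A k (blk x (c ! j) k) \<in> Rle A k 1"
proof -
  have ss: "sorted_wrt (<) c" using cuts_ss[OF n1] by (simp add: c_def)
  have lt: "c ! j < c ! Suc j" using ss_less_iff[OF ss, of j "Suc j"] j by (simp add: c_def)
  then show kp: "k > 0" by (simp add: k_def)
  have le: "c ! Suc j \<le> n" using cuts_le_m[OF n1 j] by (simp add: c_def)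
  then show sk: "c ! j + k \<le> n" using lt by (simp add: k_def)
  show bc: "blk x (c ! j) k \<in> complement A k" by (rule blk_compl[OF x(1) sk])
  show bd: "blk x (c ! j) k \<in> dominant k" by (rule blk_dom[OF x(2) sk])
  show bK: "Kset A k (blk x (c ! j) k) = {}"
  proof (rule ccontr)
    assume "Kset A k (blk x (c ! j) k) \<noteq> {}"
    then obtain t where t: "t + 1 < k" "blk x (c ! j) k t - blk x (c ! j) k (t + 1) > Max A"
      by (auto simp: Kset_def)
    then have "x (c ! j + t) - x (c ! j + t + 1) > Max A" by (simp add: blk_def)
    moreover have "c ! j + t + 1 < n" using t sk by simp
    ultimately have "c ! j + t \<in> Kset A n x" by (simp add: Kset_def)
    then have "Suc (c ! j + t) \<in> set c" using K_iff_cut by (simp add: c_def)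
    moreover have "Suc (c ! j + t) \<notin> set c"
      using between[OF ss, of j "Suc (c ! j + t)"] j t by (simp add: c_def k_def)
    ultimately show False by simp
  qed
  have k1: "k \<ge> 1" using kp by simp
  have re: "region_of A k (blk x (c ! j) k) = cell A k (blk x (c ! j) k)"
    by (rule region_of_eq[OF bc])
  have "cell A k (blk x (c ! j) k) \<in> regions A k" using bc by (simp add: regions_eq)
  moreover have "cell A k (blk x (c ! j) k) \<subseteq> dominant k" by (rule cell_dominant[OF bd])
  moreover have "level k (cell A k (blk x (c ! j) k)) = 1"
    using level_cell[OF k1 bc bd] bK by simp
  ultimately show "region_of A k (blk x (c ! j) k) \<in> Rle A k 1"
    using re by (simp add: Rle_def)
qed

lemma Rle_elem:
  assumes "D \<in> Rle A n l" "x \<in> D"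
  shows "x \<in> complement A n" "x \<in> dominant n" "D = cell A n x" "level n D = l"
proof -
  obtain x0 where x0: "x0 \<in> complement A n" "D = cell A n x0"
    using assms(1) by (auto simp: Rle_def regions_eq)
  show "x \<in> complement A n" using cell_sub_compl[OF x0(1)] x0 assms by blast
  show "x \<in> dominant n" using assms by (auto simp: Rle_def)
  show "D = cell A n x" using cell_eq x0 assms by blast
  show "level n D = l" using assms by (simp add: Rle_def)
qed

lemma part1:
  assumes n1: "n \<ge> 1" "D \<in> Rle A n l" "x \<in> D"
  shows "card (Kset A n x) = l - 1"
proof -
  have "level n (cell A n x) = card (Kset A n x) + 1"
    using level_cell[OF n1(1) Rle_elem(1,2)[OF n1(2,3)]] .
  then show ?thesis using Rle_elem(3,4)[OF n1(2,3)] by simp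
qed

lemma part2:
  assumes n1: "n \<ge> 1" "D \<in> Rle A n l" "x \<in> D" "y \<in> D"
  shows "phi_pt A n x = phi_pt A n y"
proof -
  have xc: "x \<in> complement A n" "x \<in> dominant n" using Rle_elem[OF n1(2,3)] by auto
  have yc: "y \<in> complement A n" "y \<in> dominant n" using Rle_elem[OF n1(2,4)] by auto
  have pxy: "peq A n x y" using Rle_elem(3)[OF n1(2,3)] n1(4) by (simp add: cell_def)
  have cu: "cuts A n y = cuts A n x" using Kset_peq[OF pxy] by (simp add: cuts_def)
  define c where "c = cuts A n x"
  have "\<And>j. Suc j < length c \<Longrightarrow>
     region_of A (c ! Suc j - c ! j) (blk x (c ! j) (c ! Suc j - c ! j)) =
     region_of A (c ! Suc j - c ! j) (blk y (c ! j) (c ! Suc j - c ! j))"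
  proof -
    fix j assume j: "Suc j < length c"
    define k where "k = c ! Suc j - c ! j"
    have sk: "c ! j + k \<le> n" using block_props(2)[OF n1(1) xc j[unfolded c_def]] by (simp add: c_def k_def)
    have bx: "blk x (c ! j) k \<in> complement A k" using blk_compl[OF xc(1) sk] .
    have by': "blk y (c ! j) k \<in> complement A k" using blk_compl[OF yc(1) sk] .
    have "blk y (c ! j) k \<in> cell A k (blk x (c ! j) k)"
      using blk_peq[OF pxy sk] blk_Rn by (simp add: cell_def)
    then have "cell A k (blk y (c ! j) k) = cell A k (blk x (c ! j) k)" by (rule cell_eq)
    then show "region_of A (c ! Suc j - c ! j) (blk x (c ! j) (c ! Suc j - c ! j)) =
     region_of A (c ! Suc j - c ! j) (blk y (c ! j) (c ! Suc j - c ! j))"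
      using region_of_eq[OF bx] region_of_eq[OF by'] by (simp add: k_def)
  qed
  then show ?thesis unfolding phi_alt cu c_def[symmetric] by simp
qed

lemma part3:
  assumes n1: "n \<ge> 1" "D \<in> Rle A n l" "x \<in> D" "p \<in> set (phi_pt A n x)"
  shows "snd p \<in> Rle A (fst p) 1" "fst p > 0"
proof -
  have xc: "x \<in> complement A n" "x \<in> dominant n" using Rle_elem[OF n1(2,3)] by auto
  obtain j where j0: "j < length (cuts A n x) - 1" and jp:
    "p = (cuts A n x ! Suc j - cuts A n x ! j,
    region_of A (cuts A n x ! Suc j - cuts A n x ! j)
      (blk x (cuts A n x ! j) (cuts A n x ! Suc j - cuts A n x ! j)))"
    using n1(4) unfolding phi_alt by auto
  have j: "Suc j < length (cuts A n x)" using j0 by simp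
  show "snd p \<in> Rle A (fst p) 1" "fst p > 0" using block_props(1,6)[OF n1(1) xc j] jp by auto
qed

end


context arr begin

lemma phi_len: "length (phi_pt A n x) = length (cuts A n x) - 1"
  by (simp add: phi_alt)

lemma phi_nth: "Suc j < length (cuts A n x) \<Longrightarrow> phi_pt A n x ! j =
   (cuts A n x ! Suc j - cuts A n x ! j,
    region_of A (cuts A n x ! Suc j - cuts A n x ! j)
      (blk x (cuts A n x ! j) (cuts A n x ! Suc j - cuts A n x ! j)))"
proof -
  assume "Suc j < length (cuts A n x)"
  then have "j < length (cuts A n x) - 1" by simp
  then show ?thesis by (simp add: phi_alt nth_upt)
qed

lemma phi_target:
  assumes n1: "n \<ge> 1" and D: "D \<in> Rle A n l" and x: "x \<in> D"
  shows "phi_pt A n x \<in> target A n l"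
proof -
  have xc: "x \<in> complement A n" "x \<in> dominant n" using Rle_elem[OF D x] by auto
  define c where "c = cuts A n x"
  have ss: "sorted_wrt (<) c" using cuts_ss[OF n1] by (simp add: c_def)
  have lv: "l = card (Kset A n x) + 1"
    using level_cell[OF n1 xc] Rle_elem(3,4)[OF D x] by simp
  have lc: "length c = card (Kset A n x) + 2" using cuts_len by (simp add: c_def)
  have len: "length (phi_pt A n x) = l" using phi_len lv lc by (simp add: c_def)
  define L where "L = length c - 1"
  have "map fst (phi_pt A n x) = map (\<lambda>j. c ! Suc j - c ! j) [0..<L]"
    by (simp add: phi_alt c_def L_def)
  then have "sum_list (map fst (phi_pt A n x)) = (\<Sum>j\<in>{0..<L}. c ! Suc j - c ! j)"
    by (simp add: interv_sum_list_conv_sum_set_nat)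
  also have "\<dots> = (\<Sum>j<L. c ! Suc j - c ! j)" by (simp add: atLeast0LessThan)
  also have "\<dots> = c ! L - c ! 0"
  proof -
    have "c ! L = c ! 0 + (\<Sum>t<L. c ! Suc t - c ! t)"
    proof (rule telescope)
      fix t assume "Suc t < length c"
      then show "c ! t \<le> c ! Suc t" using ss_less_iff[OF ss, of t "Suc t"] by simp
    qed (use lc L_def in simp)
    then show ?thesis by simp
  qed
  also have "\<dots> = n" using cuts_0 cuts_last[of n x] by (simp add: c_def L_def)
  finally have sm: "sum_list (map fst (phi_pt A n x)) = n" .
  have "\<forall>p\<in>set (phi_pt A n x). fst p > 0 \<and> snd p \<in> Rle A (fst p) 1"
    using part3[OF n1 D x] by blast
  then show ?thesis using len sm by (simp add: target_def)
qed

lemma inj_core: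
  assumes n1: "n \<ge> 1" and D1: "D1 \<in> Rle A n l" and x: "x \<in> D1"
    and D2: "D2 \<in> Rle A n l'" and y: "y \<in> D2"
    and eq: "phi_pt A n x = phi_pt A n y"
  shows "D1 = D2"
proof -
  have xc: "x \<in> complement A n" "x \<in> dominant n" using Rle_elem[OF D1 x] by auto
  have yc: "y \<in> complement A n" "y \<in> dominant n" using Rle_elem[OF D2 y] by auto
  define c where "c = cuts A n x"
  define c' where "c' = cuts A n y"
  have ss: "sorted_wrt (<) c" using cuts_ss[OF n1] by (simp add: c_def)
  have ss': "sorted_wrt (<) c'" using cuts_ss[OF n1] by (simp add: c'_def)
  have lc: "length c \<ge> 2" using cuts_len[of n x] by (simp add: c_def)
  have lc': "length c' \<ge> 2" using cuts_len[of n y] by (simp add: c'_def)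
  have len: "length c = length c'" using phi_len[of n x] phi_len[of n y] eq lc lc'
    by (simp add: c_def c'_def)
  have nth: "\<And>j. Suc j < length c \<Longrightarrow> phi_pt A n x ! j = phi_pt A n y ! j" using eq by simp
  have diff: "\<And>j. Suc j < length c \<Longrightarrow> c ! Suc j - c ! j = c' ! Suc j - c' ! j"
  proof -
    fix j assume j: "Suc j < length c"
    show "c ! Suc j - c ! j = c' ! Suc j - c' ! j"
      using arg_cong[OF nth[OF j], of fst] phi_nth[of j n x] phi_nth[of j n y] j len
      by (simp add: c_def c'_def)
  qed
  have ceq: "c = c'"
  proof (rule nth_equalityI[OF len])
    fix j assume j: "j < length c"
    have "c ! j = c ! 0 + (\<Sum>t<j. c ! Suc t - c ! t)"
    proof (rule telescope)
      fix t assume "Suc t < length c"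
      then show "c ! t \<le> c ! Suc t" using ss_less_iff[OF ss, of t "Suc t"] by simp
    qed (rule j)
    moreover have "c' ! j = c' ! 0 + (\<Sum>t<j. c' ! Suc t - c' ! t)"
    proof (rule telescope)
      fix t assume "Suc t < length c'"
      then show "c' ! t \<le> c' ! Suc t" using ss_less_iff[OF ss', of t "Suc t"] by simp
    qed (use j len in simp)
    moreover have "(\<Sum>t<j. c ! Suc t - c ! t) = (\<Sum>t<j. c' ! Suc t - c' ! t)"
      by (rule sum.cong) (use diff j in auto)
    ultimately show "c ! j = c' ! j" using cuts_0 by (simp add: c_def c'_def)
  qed
  have KK: "Kset A n y = Kset A n x"
    using K_iff_cut[of _ n x] K_iff_cut[of _ n y] ceq by (auto simp: c_def c'_def)
  have reg: "\<And>j. Suc j < length c \<Longrightarrow>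
     region_of A (c ! Suc j - c ! j) (blk x (c ! j) (c ! Suc j - c ! j)) =
     region_of A (c ! Suc j - c ! j) (blk y (c ! j) (c ! Suc j - c ! j))"
  proof -
    fix j assume j: "Suc j < length c"
    show "region_of A (c ! Suc j - c ! j) (blk x (c ! j) (c ! Suc j - c ! j)) =
     region_of A (c ! Suc j - c ! j) (blk y (c ! j) (c ! Suc j - c ! j))"
      using arg_cong[OF nth[OF j], of snd] phi_nth[of j n x] phi_nth[of j n y] j len ceq
      by (simp add: c_def c'_def)
  qed
  have cne: "c \<noteq> []" using lc by auto
  have c0: "c ! 0 = 0" using cuts_0 by (simp add: c_def)
  have lastc: "last c = n" using cuts_lastv by (simp add: c_def)
  have pe: "peq A n x y"
    unfolding peq_def
  proof (intro allI impI)
    fix a b h assume ab: "a < b" "b < n" and h: "h \<in> HH A"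
    have an: "a < last c" "b < last c" "c ! 0 \<le> a" "c ! 0 \<le> b" using ab lastc c0 by auto
    obtain ja where ja: "Suc ja < length c" "c ! ja \<le> a" "a < c ! Suc ja"
      using locate[OF ss cne an(3,1)] by blast
    obtain jb where jb: "Suc jb < length c" "c ! jb \<le> b" "b < c ! Suc jb"
      using locate[OF ss cne an(4,2)] by blast
    consider "ja = jb" | "ja < jb" | "jb < ja" by linarith
    then show "sgn (x a - x b - h) = sgn (y a - y b - h)"
    proof cases
      case 1
      define s where "s = c ! ja"
      define k where "k = c ! Suc ja - c ! ja"
      have sk: "s + k \<le> n" using block_props(2)[OF n1 xc ja(1)[unfolded c_def]]
        by (simp add: s_def k_def c_def)
      have bx: "blk x s k \<in> complement A k" by (rule blk_compl[OF xc(1) sk])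
      have by': "blk y s k \<in> complement A k" by (rule blk_compl[OF yc(1) sk])
      have "cell A k (blk x s k) = cell A k (blk y s k)"
        using reg[OF ja(1)] region_of_eq[OF bx] region_of_eq[OF by'] by (simp add: s_def k_def)
      then have "blk y s k \<in> cell A k (blk x s k)" using self_in_cell[OF blk_Rn] by simp
      then have p: "peq A k (blk x s k) (blk y s k)" by (simp add: cell_def)
      have idx: "a - s < b - s" "b - s < k" using ab ja jb 1 by (auto simp: s_def k_def)
      have "sgn (blk x s k (a - s) - blk x s k (b - s) - h) = sgn (blk y s k (a - s) - blk y s k (b - s) - h)"
        using p idx h unfolding peq_def by blast
      moreover have "s + (a - s) = a" "s + (b - s) = b" using ja jb 1 by (auto simp: s_def)
      ultimately show ?thesis using idx by (simp add: blk_def)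
    next
      case 2
      have "c ! Suc ja \<le> c ! jb" using ss_le_iff[OF ss, of "Suc ja" jb] 2 jb by simp
      moreover have "Suc ja < length c - 1" using 2 jb by simp
      then obtain k where k: "k \<in> Kset A n x" "c ! Suc ja = Suc k"
        using cuts_inner[OF n1, of "Suc ja" x] by (auto simp: c_def)
      ultimately have kab: "a \<le> k" "k < b" using ja jb by auto
      have "x a - x b > Max A" using separated[OF xc(2) k(1) kab ab(2)] .
      moreover have "y a - y b > Max A" using separated[OF yc(2) _ kab ab(2)] k(1) KK by simp
      ultimately show ?thesis using sgn_big h by simp
    next
      case 3
      have "c ! Suc jb \<le> c ! ja" using ss_le_iff[OF ss, of "Suc jb" ja] 3 ja by simp
      then show ?thesis using ja jb ab by simp
    qed
  qed
  have "y \<in> cell A n x" using pe yc(1) by (simp add: cell_def complement_def)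
  then have "cell A n y = cell A n x" by (rule cell_eq)
  then show ?thesis using Rle_elem(3)[OF D1 x] Rle_elem(3)[OF D2 y] by simp
qed

end


lemma blk_unique:
  assumes "sorted_wrt (<) (c::nat list)" "Suc j0 < length c" "c ! j0 \<le> i" "i < c ! Suc j0" "Suc j < length c"
  shows "(c ! j \<le> i \<and> i < c ! Suc j) = (j = j0)"
  using bvec_unique[OF assms] assms by (auto simp: bvec_def split: if_splits)

context arr begin

lemma Rle_nonempty:
  assumes "D \<in> Rle A m l" shows "\<exists>x. x \<in> D"
proof -
  obtain x0 where "x0 \<in> complement A m" "D = cell A m x0"
    using assms by (auto simp: Rle_def regions_eq)
  then show ?thesis using self_in_cell[of x0 m A] by (auto simp: complement_def)
qed

lemma surj_core:
  assumes n1: "n \<ge> 1" and l1: "l \<ge> 1" and ps: "ps \<in> target A n l"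
  shows "\<exists>D\<in>Rle A n l. phi_pt A n (SOME x. x \<in> D) = ps"
proof -
  have lps: "length ps = l" and sps: "sum_list (map fst ps) = n"
    and pps: "\<forall>p\<in>set ps. fst p > 0 \<and> snd p \<in> Rle A (fst p) 1"
    using ps by (auto simp: target_def)
  define nn where "nn = (\<lambda>j. fst (ps ! j))"
  have nnpos: "\<And>j. j < l \<Longrightarrow> nn j > 0" using pps lps by (auto simp: nn_def)
  have Rj: "\<And>j. j < l \<Longrightarrow> snd (ps ! j) \<in> Rle A (nn j) 1" using pps lps by (auto simp: nn_def)
  define z where "z = (\<lambda>j. SOME y. y \<in> snd (ps ! j))"
  have zin: "\<And>j. j < l \<Longrightarrow> z j \<in> snd (ps ! j)"
    unfolding z_def using Rle_nonempty[OF Rj] by (metis someI)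
  have zc: "\<And>j. j < l \<Longrightarrow> z j \<in> complement A (nn j)"
    "\<And>j. j < l \<Longrightarrow> z j \<in> dominant (nn j)"
    "\<And>j. j < l \<Longrightarrow> snd (ps ! j) = cell A (nn j) (z j)"
    using Rle_elem[OF Rj zin] by auto
  have zK: "\<And>j. j < l \<Longrightarrow> Kset A (nn j) (z j) = {}"
  proof -
    fix j assume j: "j < l"
    have "level (nn j) (cell A (nn j) (z j)) = card (Kset A (nn j) (z j)) + 1"
      using level_cell[of "nn j" "z j"] nnpos[OF j] zc[OF j] by simp
    moreover have "level (nn j) (cell A (nn j) (z j)) = 1"
      using Rle_elem(4)[OF Rj[OF j] zin[OF j]] zc(3)[OF j] by simp
    ultimately show "Kset A (nn j) (z j) = {}" using Kset_sub(2) by simp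
  qed
  define cs where "cs = map (\<lambda>j. sum_list (map fst (take j ps))) [0..<Suc l]"
  have lcs: "length cs = Suc l" by (simp add: cs_def)
  have csj: "\<And>j. j \<le> l \<Longrightarrow> cs ! j = sum_list (map fst (take j ps))"
    by (simp add: cs_def nth_upt del: upt_Suc)
  have cs0: "cs ! 0 = 0" using csj[of 0] by simp
  have csl: "cs ! l = n" using csj[of l] lps sps by simp
  have csS: "\<And>j. j < l \<Longrightarrow> cs ! Suc j = cs ! j + nn j"
    using csj lps by (simp add: take_Suc_conv_app_nth nn_def)
  have ss: "sorted_wrt (<) cs"
  proof -
    have "\<forall>i. Suc i < length cs \<longrightarrow> cs ! i < cs ! Suc i" using csS nnpos lcs by auto
    then show ?thesis by (simp add: sorted_wrt_iff_nth_Suc_transp)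
  qed
  have cne: "cs \<noteq> []" using lcs by auto
  have lastcs: "last cs = n" using csl lcs cne by (simp add: last_conv_nth)
  have csle: "\<And>j. j \<le> l \<Longrightarrow> cs ! j \<le> n"
  proof -
    fix j assume "j \<le> l"
    then have "cs ! j \<le> cs ! l" using ss_le_iff[OF ss, of j l] lcs by simp
    then show "cs ! j \<le> n" using csl by simp
  qed
  define C where "C = (\<Sum>j<l. \<Sum>t<nn j. \<bar>z j t\<bar>)"
  have zC: "\<And>j t. j < l \<Longrightarrow> t < nn j \<Longrightarrow> \<bar>z j t\<bar> \<le> C"
  proof -
    fix j t assume j: "j < l" and t: "t < nn j"
    have "\<bar>z j t\<bar> \<le> (\<Sum>t<nn j. \<bar>z j t\<bar>)" using t by (intro member_le_sum) auto
    also have "\<dots> \<le> C" unfolding C_def using j by (intro member_le_sum) (auto intro: sum_nonneg)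
    finally show "\<bar>z j t\<bar> \<le> C" .
  qed
  have C0: "C \<ge> 0" unfolding C_def by (intro sum_nonneg) auto
  define G where "G = 2 * C + Max A + 1"
  have G0: "G > 0" using C0 MaxA(2) by (simp add: G_def)
  define x where "x = (\<lambda>i. if i < n then \<Sum>j<l. (if cs ! j \<le> i \<and> i < cs ! Suc j
      then z j (i - cs ! j) - real j * G else 0) else 0)"
  have xblk: "\<And>j i. j < l \<Longrightarrow> cs ! j \<le> i \<Longrightarrow> i < cs ! Suc j \<Longrightarrow> x i = z j (i - cs ! j) - real j * G"
  proof -
    fix j i assume j: "j < l" and i: "cs ! j \<le> i" "i < cs ! Suc j"
    have "i < n" using i csle[of "Suc j"] j by simp
    moreover have "(\<Sum>j'<l. (if cs ! j' \<le> i \<and> i < cs ! Suc j' then z j' (i - cs ! j') - real j' * G else 0))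
      = (\<Sum>j'\<in>{..<l}. (if j' = j then z j (i - cs ! j) - real j * G else 0))"
    proof (rule sum.cong)
      fix j' assume "j' \<in> {..<l}"
      then have "(cs ! j' \<le> i \<and> i < cs ! Suc j') = (j' = j)"
        using blk_unique[OF ss, of j i j'] j i lcs by simp
      then show "(if cs ! j' \<le> i \<and> i < cs ! Suc j' then z j' (i - cs ! j') - real j' * G else 0)
        = (if j' = j then z j (i - cs ! j) - real j * G else 0)" by simp
    qed simp
    ultimately show "x i = z j (i - cs ! j) - real j * G" using j by (simp add: x_def)
  qed
  have loc: "\<And>i. i < n \<Longrightarrow> \<exists>j<l. cs ! j \<le> i \<and> i < cs ! Suc j"
  proof -
    fix i assume "i < n"
    then have "cs ! 0 \<le> i" "i < last cs" using cs0 lastcs by auto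
    then obtain j where "Suc j < length cs" "cs ! j \<le> i" "i < cs ! Suc j"
      using locate[OF ss cne] by blast
    then show "\<exists>j<l. cs ! j \<le> i \<and> i < cs ! Suc j" using lcs by auto
  qed
  have ord: "\<And>a b ja jb. a \<le> b \<Longrightarrow> ja < l \<Longrightarrow> jb < l \<Longrightarrow> cs ! ja \<le> a \<Longrightarrow> a < cs ! Suc ja
      \<Longrightarrow> cs ! jb \<le> b \<Longrightarrow> b < cs ! Suc jb \<Longrightarrow> ja \<le> jb"
  proof (rule ccontr)
    fix a b ja jb assume h: "a \<le> b" "ja < l" "jb < l" "cs ! ja \<le> a" "a < cs ! Suc ja"
      "cs ! jb \<le> b" "b < cs ! Suc jb" "\<not> ja \<le> jb"
    then have "cs ! Suc jb \<le> cs ! ja" using ss_le_iff[OF ss, of "Suc jb" ja] lcs by simp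
    then show False using h by simp
  qed
  have cross: "\<And>a b ja jb. ja < jb \<Longrightarrow> jb < l \<Longrightarrow> cs ! ja \<le> a \<Longrightarrow> a < cs ! Suc ja
      \<Longrightarrow> cs ! jb \<le> b \<Longrightarrow> b < cs ! Suc jb \<Longrightarrow> x a - x b > Max A"
  proof -
    fix a b ja jb assume h: "ja < jb" "jb < l" "cs ! ja \<le> a" "a < cs ! Suc ja"
      "cs ! jb \<le> b" "b < cs ! Suc jb"
    have ja: "ja < l" using h by simp
    have xa: "x a = z ja (a - cs ! ja) - real ja * G" using xblk[OF ja h(3,4)] .
    have xb: "x b = z jb (b - cs ! jb) - real jb * G" using xblk[OF h(2) h(5,6)] .
    have "a - cs ! ja < nn ja" using h csS[OF ja] by simp
    then have za: "\<bar>z ja (a - cs ! ja)\<bar> \<le> C" using zC[OF ja] by simp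
    have "b - cs ! jb < nn jb" using h csS[OF h(2)] by simp
    then have zb: "\<bar>z jb (b - cs ! jb)\<bar> \<le> C" using zC[OF h(2)] by simp
    have "real jb - real ja \<ge> 1" using h by simp
    then have "(real jb - real ja) * G \<ge> G" using G0 by simp
    then have "x a - x b \<ge> - C - C + G" using xa xb za zb by (simp add: algebra_simps)
    then show "x a - x b > Max A" by (simp add: G_def)
  qed
  have same: "\<And>a j. j < l \<Longrightarrow> cs ! j \<le> a \<Longrightarrow> a < cs ! Suc j \<Longrightarrow> a - cs ! j < nn j"
    using csS by fastforce
  have xR: "x \<in> Rn n" by (simp add: x_def Rn_def)
  have xc: "x \<in> complement A n"
  proof -
    have "\<forall>a b h. a < b \<longrightarrow> b < n \<longrightarrow> h \<in> HH A \<longrightarrow> x a - x b \<noteq> h"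
    proof (intro allI impI)
      fix a b h assume ab: "a < b" "b < n" and h: "h \<in> HH A"
      obtain ja where ja: "ja < l" "cs ! ja \<le> a" "a < cs ! Suc ja" using loc[of a] ab(1,2) less_trans by blast
      obtain jb where jb: "jb < l" "cs ! jb \<le> b" "b < cs ! Suc jb" using loc ab by blast
      have "ja \<le> jb" using ord[of a b ja jb] ab ja jb by simp
      then consider "ja = jb" | "ja < jb" by linarith
      then show "x a - x b \<noteq> h"
      proof cases
        case 1
        have "x a - x b = z ja (a - cs ! ja) - z ja (b - cs ! ja)"
          using xblk[OF ja] xblk[OF jb] 1 by simp
        moreover have "a - cs ! ja < b - cs ! ja" "b - cs ! ja < nn ja"
          using ab ja jb 1 same[OF jb(1)] by auto
        ultimately show ?thesis using zc(1)[OF ja(1)] h compl_iff by metis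
      next
        case 2
        then show ?thesis using cross[OF 2 jb(1) ja(2,3) jb(2,3)] HH_bound[OF h] by simp
      qed
    qed
    then show ?thesis using xR compl_iff by blast
  qed
  have xd: "x \<in> dominant n"
    unfolding dominant_def
  proof (intro CollectI allI impI)
    fix i assume i: "i + 1 < n"
    obtain ja where ja: "ja < l" "cs ! ja \<le> i" "i < cs ! Suc ja" using loc[of i] i by auto
    obtain jb where jb: "jb < l" "cs ! jb \<le> i + 1" "i + 1 < cs ! Suc jb" using loc i by blast
    have "ja \<le> jb" using ord[of i "i+1" ja jb] ja jb by simp
    then consider "ja = jb" | "ja < jb" by linarith
    then show "x i > x (i + 1)"
    proof cases
      case 1
      have e: "i + 1 - cs ! ja = (i - cs ! ja) + 1" using ja by simp
      have "x i - x (i + 1) = z ja (i - cs ! ja) - z ja ((i - cs ! ja) + 1)"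
        using xblk[OF ja] xblk[OF jb] 1 e by simp
      moreover have "(i - cs ! ja) + 1 < nn ja" using same[OF jb(1)] jb 1 e by fastforce
      moreover have "z ja (i - cs ! ja) > z ja ((i - cs ! ja) + 1)"
        using zc(2)[OF ja(1)] calculation(2) unfolding dominant_def by blast
      ultimately show ?thesis by linarith
    next
      case 2
      then show ?thesis using cross[OF 2 jb(1) ja(2,3) jb(2,3)] MaxA(2) by simp
    qed
  qed
  have Kiff: "\<And>k. k \<in> Kset A n x \<longleftrightarrow> k + 1 < n \<and> Suc k \<in> set cs"
  proof
    fix k assume k: "k \<in> Kset A n x"
    then have k1: "k + 1 < n" and kx: "x k - x (k + 1) > Max A" by (auto simp: Kset_def)
    obtain ja where ja: "ja < l" "cs ! ja \<le> k" "k < cs ! Suc ja" using loc[of k] k1 by auto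
    obtain jb where jb: "jb < l" "cs ! jb \<le> k + 1" "k + 1 < cs ! Suc jb" using loc k1 by blast
    have "ja \<le> jb" using ord[of k "k+1" ja jb] ja jb by simp
    moreover have "ja \<noteq> jb"
    proof
      assume 1: "ja = jb"
      have e: "k + 1 - cs ! ja = (k - cs ! ja) + 1" using ja by simp
      have "x k - x (k + 1) = z ja (k - cs ! ja) - z ja ((k - cs ! ja) + 1)"
        using xblk[OF ja] xblk[OF jb] 1 e by simp
      moreover have "(k - cs ! ja) + 1 < nn ja" using same[OF jb(1)] jb 1 e by fastforce
      ultimately have "k - cs ! ja \<in> Kset A (nn ja) (z ja)" using kx by (simp add: Kset_def)
      then show False using zK[OF ja(1)] by simp
    qed
    ultimately have "ja < jb" by simp
    then have "cs ! Suc ja \<le> cs ! jb" using ss_le_iff[OF ss, of "Suc ja" jb] jb lcs by simp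
    then have "cs ! Suc ja = Suc k" using ja jb by simp
    moreover have "Suc ja < length cs" using ja lcs by simp
    ultimately have "Suc k \<in> set cs" by (metis nth_mem)
    then show "k + 1 < n \<and> Suc k \<in> set cs" using k1 by simp
  next
    fix k assume k: "k + 1 < n \<and> Suc k \<in> set cs"
    then obtain t where t: "t < length cs" "cs ! t = Suc k" by (auto simp: in_set_conv_nth)
    have "t \<noteq> 0"
    proof
      assume "t = 0" then show False using t cs0 by simp
    qed
    moreover have "t \<noteq> l" using t csl k by auto
    ultimately obtain j where j: "t = Suc j" "Suc j < l" using t lcs
      by (metis Suc_lessI less_Suc_eq not0_implies_Suc)
    have lt1: "cs ! j < cs ! Suc j" using ss_less_iff[OF ss, of j "Suc j"] j lcs by simp
    have lt2: "cs ! Suc j < cs ! Suc (Suc j)" using ss_less_iff[OF ss, of "Suc j" "Suc (Suc j)"] j lcs by simp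
    have "x k - x (k + 1) > Max A"
      using cross[of j "Suc j" k "k+1"] j t lt1 lt2 by simp
    then show "k \<in> Kset A n x" using k by (simp add: Kset_def)
  qed
  have cuteq: "cuts A n x = cs"
  proof (rule sorted_distinct_set_unique)
    show "sorted (cuts A n x)" "distinct (cuts A n x)" using cuts_ss[OF n1] strict_sorted_iff by blast+
    show "sorted cs" "distinct cs" using ss strict_sorted_iff by blast+
    have "set cs = insert 0 (insert n (Suc ` Kset A n x))"
    proof (intro set_eqI iffI)
      fix v assume v: "v \<in> set cs"
      then obtain t where t: "t < length cs" "cs ! t = v" by (auto simp: in_set_conv_nth)
      have "v \<le> n" using csle[of t] t lcs by simp
      show "v \<in> insert 0 (insert n (Suc ` Kset A n x))"
      proof (cases "v = 0 \<or> v = n")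
        case False
        then have "v - 1 + 1 < n" "Suc (v - 1) = v" using \<open>v \<le> n\<close> by auto
        then have "v - 1 \<in> Kset A n x" using Kiff v by simp
        then show ?thesis using \<open>Suc (v - 1) = v\<close> by (metis image_eqI insertCI)
      qed auto
    next
      fix v assume "v \<in> insert 0 (insert n (Suc ` Kset A n x))"
      moreover have "0 \<in> set cs" using cs0 lcs by (metis nth_mem zero_less_Suc)
      moreover have "n \<in> set cs" using csl lcs by (metis nth_mem lessI)
      ultimately show "v \<in> set cs" using Kiff by auto
    qed
    then show "set (cuts A n x) = set cs" using cuts_set by simp
  qed
  define D where "D = cell A n x"
  have DR: "D \<in> regions A n" using xc by (simp add: regions_eq D_def)
  have Dd: "D \<subseteq> dominant n" using cell_dominant[OF xd] by (simp add: D_def)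
  have "length (cuts A n x) = card (Kset A n x) + 2" by (rule cuts_len)
  then have ck: "card (Kset A n x) + 1 = l" using cuteq lcs by simp
  have Dl: "level n D = l" using level_cell[OF n1 xc xd] ck by (simp add: D_def)
  have DRle: "D \<in> Rle A n l" using DR Dd Dl by (simp add: Rle_def)
  have xD: "x \<in> D" using self_in_cell[OF xR] by (simp add: D_def)
  have phx: "phi_pt A n x = ps"
  proof (rule nth_equalityI)
    show "length (phi_pt A n x) = length ps" using phi_len[of n x] cuteq lcs lps by simp
  next
    fix j assume "j < length (phi_pt A n x)"
    then have j: "j < l" using phi_len[of n x] cuteq lcs by simp
    have sj: "Suc j < length (cuts A n x)" using j cuteq lcs by simp
    have d: "cs ! Suc j - cs ! j = nn j" using csS[OF j] by simp
    define w where "w = blk x (cs ! j) (nn j)"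
    have wv: "\<And>t. t < nn j \<Longrightarrow> w t = z j t - real j * G"
      using xblk[OF j] csS[OF j] by (simp add: w_def blk_def)
    have "peq A (nn j) (z j) w"
      unfolding peq_def using wv by simp
    then have "w \<in> cell A (nn j) (z j)" using blk_Rn by (simp add: cell_def w_def)
    then have cw: "cell A (nn j) w = snd (ps ! j)" using cell_eq zc(3)[OF j] by metis
    have "w \<in> complement A (nn j)" using cell_sub_compl[OF zc(1)[OF j]] \<open>w \<in> cell A (nn j) (z j)\<close> by blast
    then have "region_of A (nn j) w = snd (ps ! j)" using region_of_eq cw by metis
    then show "phi_pt A n x ! j = ps ! j"
      using phi_nth[OF sj] cuteq d by (simp add: w_def nn_def)
  qed
  have "(SOME y. y \<in> D) \<in> D" using xD by (metis someI)
  then have "phi_pt A n (SOME y. y \<in> D) = phi_pt A n x" using part2[OF n1 DRle] xD by blast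
  then show ?thesis using DRle phx by auto
qed

end


theorem lemma3p3:
  fixes A :: "real set" and n l :: nat
  assumes "finite A" and "A \<noteq> {}" and "\<forall>a\<in>A. a > 0"
    and "n \<ge> 1" and "l \<ge> 1"
  shows "(\<forall>D\<in>Rle A n l. \<forall>x\<in>D. card (Kset A n x) = l - 1)
       \<and> (\<forall>D\<in>Rle A n l. \<forall>x\<in>D. \<forall>y\<in>D. phi_pt A n x = phi_pt A n y)
       \<and> (\<forall>D\<in>Rle A n l. \<forall>x\<in>D. \<forall>p\<in>set (phi_pt A n x). snd p \<in> Rle A (fst p) 1)
       \<and> bij_betw (\<lambda>D. phi_pt A n (SOME x. x \<in> D)) (Rle A n l) (target A n l)"
proof -
  interpret arr A using assms(1-3) by unfold_locales
  have n1: "n \<ge> 1" by (rule assms(4))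
  have c1: "\<forall>D\<in>Rle A n l. \<forall>x\<in>D. card (Kset A n x) = l - 1"
  proof (intro ballI)
    fix D x assume "D \<in> Rle A n l" "x \<in> D"
    then show "card (Kset A n x) = l - 1" by (rule part1[OF n1])
  qed
  have c2: "\<forall>D\<in>Rle A n l. \<forall>x\<in>D. \<forall>y\<in>D. phi_pt A n x = phi_pt A n y"
  proof (intro ballI)
    fix D x y assume "D \<in> Rle A n l" "x \<in> D" "y \<in> D"
    then show "phi_pt A n x = phi_pt A n y" by (rule part2[OF n1])
  qed
  have c3: "\<forall>D\<in>Rle A n l. \<forall>x\<in>D. \<forall>p\<in>set (phi_pt A n x). snd p \<in> Rle A (fst p) 1"
  proof (intro ballI)
    fix D x p assume "D \<in> Rle A n l" "x \<in> D" "p \<in> set (phi_pt A n x)"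
    then show "snd p \<in> Rle A (fst p) 1" by (rule part3(1)[OF n1])
  qed
  have some: "\<And>D. D \<in> Rle A n l \<Longrightarrow> (SOME x. x \<in> D) \<in> D"
  proof -
    fix D assume "D \<in> Rle A n l"
    then obtain x where "x \<in> D" using Rle_nonempty by blast
    then show "(SOME x. x \<in> D) \<in> D" by (rule someI[where P="\<lambda>x. x \<in> D"])
  qed
  have inj: "inj_on (\<lambda>D. phi_pt A n (SOME x. x \<in> D)) (Rle A n l)"
  proof (rule inj_onI)
    fix D1 D2 assume D: "D1 \<in> Rle A n l" "D2 \<in> Rle A n l"
      and e: "phi_pt A n (SOME x. x \<in> D1) = phi_pt A n (SOME x. x \<in> D2)"
    show "D1 = D2" using inj_core[OF n1 D(1) some[OF D(1)] D(2) some[OF D(2)] e] .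
  qed
  have im: "(\<lambda>D. phi_pt A n (SOME x. x \<in> D)) ` Rle A n l = target A n l"
  proof
    show "(\<lambda>D. phi_pt A n (SOME x. x \<in> D)) ` Rle A n l \<subseteq> target A n l"
    proof (rule image_subsetI)
      fix D assume D: "D \<in> Rle A n l"
      show "phi_pt A n (SOME x. x \<in> D) \<in> target A n l" by (rule phi_target[OF n1 D some[OF D]])
    qed
    show "target A n l \<subseteq> (\<lambda>D. phi_pt A n (SOME x. x \<in> D)) ` Rle A n l"
    proof
      fix ps assume "ps \<in> target A n l"
      then obtain D where "D \<in> Rle A n l" "phi_pt A n (SOME x. x \<in> D) = ps"
        using surj_core[OF n1 assms(5)] by blast
      then show "ps \<in> (\<lambda>D. phi_pt A n (SOME x. x \<in> D)) ` Rle A n l" by (metis rev_image_eqI)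
    qed
  qed
  have "bij_betw (\<lambda>D. phi_pt A n (SOME x. x \<in> D)) (Rle A n l) (target A n l)"
    unfolding bij_betw_def using inj im by (rule conjI)
  then show ?thesis using c1 c2 c3 by (intro conjI)
qed


end
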